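(* Let $\dot P$ be a diverse colored poset and let $n$ be a positive integer. Then $$2n\le \tilde{R}(\dot P,Q_n)\le h(P)\,n+\dim_2(P).$$
   Context: A poset is a set with a reflexive, antisymmetric, transitive relation; its elements are called vertices. $Q_N$ denotes the Boolean lattice of all subsets of an $N$-element set ordered by inclusion. A colored poset $\dot P=(P,c_P)$ is a poset $P$ together with a coloring $c_P\colon P\to\{\text{blue},\text{red}\}$. A (induced) copy of a poset $P$ in a poset $Q$ is the image of an injective map $\phi\colon P\to Q$ with $X\le_P Y$ iff $\phi(X)\le_Q\phi(Y)$. Given a coloring of $Q$, a copy of the colored poset $\dot P$ is an induced copy of $P$ in which each vertex has the same color as the corresponding vertex of $\dot P$. A monochromatic copy of $Q_n$ is an induced copy of $Q_n$ all of whose vertices have the same color. The poset Erdős–Hajnal number $\tilde{R}(\dot P,Q_n)$ is the minimum $N$ such that every blue/red coloring of the vertices of $Q_N$ contains a copy of $\dot P$ or a monochromatic (all blue or all red) induced copy of $Q_n$. $\dot P$ is diverse if it contains two comparable vertices of distinct colors. The height $h(P)$ is the size of a largest chain in $P$, and the 2-dimension $\dim_2(P)$ is the smallest $N$ such that $Q_N$ contains an induced copy of $P$. *)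

theory Defs
  imports Main
begin

definition is_poset :: "'a set \<Rightarrow> ('a \<Rightarrow> 'a \<Rightarrow> bool) \<Rightarrow> bool" where
  "is_poset A le \<longleftrightarrow> finite A \<and>
     (\<forall>x\<in>A. le x x) \<and>
     (\<forall>x\<in>A. \<forall>y\<in>A. le x y \<and> le y x \<longrightarrow> x = y) \<and>
     (\<forall>x\<in>A. \<forall>y\<in>A. \<forall>z\<in>A. le x y \<and> le y z \<longrightarrow> le x z)"

definition Q :: "nat \<Rightarrow> nat set set" where
  "Q N = Pow {..<N}"

definition induced_copy ::
  "'a set \<Rightarrow> ('a \<Rightarrow> 'a \<Rightarrow> bool) \<Rightarrow> nat \<Rightarrow> ('a \<Rightarrow> nat set) \<Rightarrow> bool" where
  "induced_copy A le N phi \<longleftrightarrow> inj_on phi A \<and> phi ` A \<subseteq> Q N \<and>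
     (\<forall>x\<in>A. \<forall>y\<in>A. le x y \<longleftrightarrow> phi x \<subseteq> phi y)"

definition contains_colored_copy ::
  "'a set \<Rightarrow> ('a \<Rightarrow> 'a \<Rightarrow> bool) \<Rightarrow> ('a \<Rightarrow> bool) \<Rightarrow> nat \<Rightarrow> (nat set \<Rightarrow> bool) \<Rightarrow> bool" where
  "contains_colored_copy A le c N f \<longleftrightarrow>
     (\<exists>phi. induced_copy A le N phi \<and> (\<forall>x\<in>A. f (phi x) = c x))"

definition contains_mono_Qn :: "nat \<Rightarrow> nat \<Rightarrow> (nat set \<Rightarrow> bool) \<Rightarrow> bool" where
  "contains_mono_Qn n N f \<longleftrightarrow>
     (\<exists>psi col. induced_copy (Q n) (\<subseteq>) N psi \<and> (\<forall>X\<in>Q n. f (psi X) = col))"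

definition poset_EH_number ::
  "'a set \<Rightarrow> ('a \<Rightarrow> 'a \<Rightarrow> bool) \<Rightarrow> ('a \<Rightarrow> bool) \<Rightarrow> nat \<Rightarrow> nat" where
  "poset_EH_number A le c n = (LEAST N. \<forall>f :: nat set \<Rightarrow> bool.
      contains_colored_copy A le c N f \<or> contains_mono_Qn n N f)"

definition diverse :: "'a set \<Rightarrow> ('a \<Rightarrow> 'a \<Rightarrow> bool) \<Rightarrow> ('a \<Rightarrow> bool) \<Rightarrow> bool" where
  "diverse A le c \<longleftrightarrow> (\<exists>x\<in>A. \<exists>y\<in>A. le x y \<and> c x \<noteq> c y)"

definition is_chain :: "'a set \<Rightarrow> ('a \<Rightarrow> 'a \<Rightarrow> bool) \<Rightarrow> 'a set \<Rightarrow> bool" where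
  "is_chain A le C \<longleftrightarrow> C \<subseteq> A \<and> (\<forall>x\<in>C. \<forall>y\<in>C. le x y \<or> le y x)"

definition height :: "'a set \<Rightarrow> ('a \<Rightarrow> 'a \<Rightarrow> bool) \<Rightarrow> nat" where
  "height A le = Max (card ` {C. is_chain A le C})"

definition dim2 :: "'a set \<Rightarrow> ('a \<Rightarrow> 'a \<Rightarrow> bool) \<Rightarrow> nat" where
  "dim2 A le = (LEAST N. \<exists>phi. induced_copy A le N phi)"

end

theory Submission
  imports Defs
begin

lemma copy_chain_growth:
  assumes ic: "induced_copy (Q n) (\<subseteq>) N psi"
  shows "k \<le> n \<Longrightarrow> card (psi {}) + k \<le> card (psi {..<k})"
proof (induction k)
  case 0
  then show ?case by simp
next
  case (Suc k)
  have m1: "{..<k} \<in> Q n" "{..<Suc k} \<in> Q n" using Suc.prems by (auto simp: Q_def)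
  have sub: "psi {..<k} \<subseteq> psi {..<Suc k}"
  proof -
    have "{..<k} \<subseteq> {..<Suc k}" by auto
    then show ?thesis using ic m1 unfolding induced_copy_def by blast
  qed
  have ne: "psi {..<k} \<noteq> psi {..<Suc k}"
  proof
    assume "psi {..<k} = psi {..<Suc k}"
    then have "{..<k} = {..<Suc k}" using ic m1 unfolding induced_copy_def inj_on_def by blast
    then show False by (metis lessThan_iff lessI less_irrefl)
  qed
  have fin: "finite (psi {..<Suc k})" using ic m1 unfolding induced_copy_def Q_def
    by (meson PowD finite_lessThan finite_subset image_subset_iff)
  have "card (psi {..<k}) < card (psi {..<Suc k})"
    using sub ne fin by (meson psubset_card_mono psubsetI)
  then show ?case using Suc by simp
qed

lemma lower_aux:
  assumes "N < 2 * n" and "diverse A le c"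
  shows "\<not> (\<forall>f. contains_colored_copy A le c N f \<or> contains_mono_Qn n N f)"
proof -
  obtain x0 y0 where xy: "x0 \<in> A" "y0 \<in> A" "le x0 y0" "c x0 \<noteq> c y0"
    using assms(2) unfolding diverse_def by blast
  define f where "f = (\<lambda>X::nat set. c y0 = (card X < n))"
  have "\<not> contains_colored_copy A le c N f"
  proof
    assume "contains_colored_copy A le c N f"
    then obtain phi where ic: "induced_copy A le N phi" and col: "\<forall>x\<in>A. f (phi x) = c x"
      unfolding contains_colored_copy_def by blast
    have sub: "phi x0 \<subseteq> phi y0" using ic xy unfolding induced_copy_def by blast
    have fin: "finite (phi y0)" using ic xy unfolding induced_copy_def Q_def
      by (meson PowD finite_lessThan finite_subset image_subset_iff)
    have "card (phi x0) \<le> card (phi y0)" using sub fin card_mono by blast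
    moreover have "card (phi y0) < n" using col xy unfolding f_def by auto
    moreover have "\<not> card (phi x0) < n" using col xy unfolding f_def by auto
    ultimately show False by simp
  qed
  moreover have "\<not> contains_mono_Qn n N f"
  proof
    assume "contains_mono_Qn n N f"
    then obtain psi col where ic: "induced_copy (Q n) (\<subseteq>) N psi" and cl: "\<forall>X\<in>Q n. f (psi X) = col"
      unfolding contains_mono_Qn_def by blast
    have g: "card (psi {}) + n \<le> card (psi {..<n})" using copy_chain_growth[OF ic] by simp
    have m: "{} \<in> Q n" "{..<n} \<in> Q n" by (auto simp: Q_def)
    have "psi {..<n} \<subseteq> {..<N}" using ic m unfolding induced_copy_def Q_def by blast
    then have "card (psi {..<n}) \<le> N" by (metis card_lessThan card_mono finite_lessThan)
    moreover have "(card (psi {}) < n) = (card (psi {..<n}) < n)"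
      using cl m unfolding f_def by auto
    ultimately show False using g assms(1) by linarith
  qed
  ultimately show ?thesis by blast
qed

lemma embed_exists:
  assumes P: "is_poset A le"
  shows "\<exists>N phi. induced_copy A le N phi"
proof -
  have finA: "finite A" using P unfolding is_poset_def by blast
  have refl: "\<And>x. x \<in> A \<Longrightarrow> le x x" using P unfolding is_poset_def by blast
  have anti: "\<And>x y. x \<in> A \<Longrightarrow> y \<in> A \<Longrightarrow> le x y \<Longrightarrow> le y x \<Longrightarrow> x = y"
    using P unfolding is_poset_def by blast
  have trans: "\<And>x y z. x \<in> A \<Longrightarrow> y \<in> A \<Longrightarrow> z \<in> A \<Longrightarrow> le x y \<Longrightarrow> le y z \<Longrightarrow> le x z"
    using P unfolding is_poset_def by blast
  obtain idx where bij: "bij_betw idx A {0..<card A}"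
    using ex_bij_betw_finite_nat[OF finA] by blast
  have inj: "inj_on idx A" using bij bij_betw_def by blast
  have rng: "idx ` A \<subseteq> {..<card A}" using bij unfolding bij_betw_def by auto
  define phi where "phi = (\<lambda>x. idx ` {y\<in>A. le y x})"
  have ord: "le x y \<longleftrightarrow> phi x \<subseteq> phi y" if xy: "x \<in> A" "y \<in> A" for x y
  proof
    assume "le x y"
    then have "{z\<in>A. le z x} \<subseteq> {z\<in>A. le z y}" using trans xy by blast
    then show "phi x \<subseteq> phi y" unfolding phi_def by (rule image_mono)
  next
    assume "phi x \<subseteq> phi y"
    moreover have "idx x \<in> phi x" unfolding phi_def using refl xy by blast
    ultimately have "idx x \<in> idx ` {z\<in>A. le z y}" unfolding phi_def by blast
    then obtain z where z0: "z \<in> {z\<in>A. le z y}" "idx x = idx z" by (rule imageE)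
    then have z: "z \<in> A" "le z y" "idx z = idx x" by simp_all
    then have "z = x" using inj xy(1) unfolding inj_on_def by blast
    then show "le x y" using z by simp
  qed
  have "induced_copy A le (card A) phi"
    unfolding induced_copy_def
  proof (intro conjI)
    show "inj_on phi A"
    proof (rule inj_onI)
      fix x y assume xy: "x \<in> A" "y \<in> A" "phi x = phi y"
      then have "le x y" "le y x" using ord by auto
      then show "x = y" using anti xy by blast
    qed
    show "phi ` A \<subseteq> Q (card A)" using rng unfolding phi_def Q_def by auto
    show "\<forall>x\<in>A. \<forall>y\<in>A. le x y = (phi x \<subseteq> phi y)" using ord by blast
  qed
  then show ?thesis by blast
qed

lemma rank_exists:
  assumes P: "is_poset A le"
  shows "\<exists>r. (\<forall>x\<in>A. 1 \<le> r x \<and> r x \<le> height A le) \<and>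
     (\<forall>x\<in>A. \<forall>y\<in>A. le x y \<and> x \<noteq> y \<longrightarrow> r x < r y)"
proof -
  have finA: "finite A" using P unfolding is_poset_def by blast
  have refl: "\<And>x. x \<in> A \<Longrightarrow> le x x" using P unfolding is_poset_def by blast
  have anti: "\<And>x y. x \<in> A \<Longrightarrow> y \<in> A \<Longrightarrow> le x y \<Longrightarrow> le y x \<Longrightarrow> x = y"
    using P unfolding is_poset_def by blast
  have trans: "\<And>x y z. x \<in> A \<Longrightarrow> y \<in> A \<Longrightarrow> z \<in> A \<Longrightarrow> le x y \<Longrightarrow> le y z \<Longrightarrow> le x z"
    using P unfolding is_poset_def by blast
  define CH where "CH = (\<lambda>x. {C. is_chain A le C \<and> (\<forall>z\<in>C. le z x)})"
  define r where "r = (\<lambda>x. Max (card ` CH x))"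
  have finall: "finite {C. is_chain A le C}"
    by (rule finite_subset[of _ "Pow A"]) (auto simp: is_chain_def finA)
  have finCH: "finite (CH x)" for x
    by (rule finite_subset[OF _ finall]) (auto simp: CH_def)
  have single: "{x} \<in> CH x" if "x \<in> A" for x
    using refl that unfolding CH_def is_chain_def by auto
  have b1: "1 \<le> r x \<and> r x \<le> height A le" if "x \<in> A" for x
  proof
    have "card {x} \<in> card ` CH x" using single[OF that] by (rule imageI)
    then have "card {x} \<le> r x" unfolding r_def using finCH by (intro Max_ge) simp_all
    then show "1 \<le> r x" by simp
  next
    have "card ` CH x \<subseteq> card ` {C. is_chain A le C}" by (auto simp: CH_def)
    moreover have "card ` CH x \<noteq> {}" using single[OF that] by blast
    ultimately show "r x \<le> height A le" unfolding r_def height_def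
      using finall by (intro Max_mono) simp_all
  qed
  have b2: "r x < r y" if xy: "x \<in> A" "y \<in> A" "le x y" "x \<noteq> y" for x y
  proof -
    have "card ` CH x \<noteq> {}" using single[OF xy(1)] by blast
    then have "r x \<in> card ` CH x" unfolding r_def using finCH by (intro Max_in) simp_all
    then obtain C where C: "C \<in> CH x" "card C = r x" by auto
    have CA: "C \<subseteq> A" and Cch: "\<forall>u\<in>C. \<forall>v\<in>C. le u v \<or> le v u" and Cx: "\<forall>z\<in>C. le z x"
      using C unfolding CH_def is_chain_def by auto
    have yC: "y \<notin> C"
    proof
      assume "y \<in> C"
      then have "le y x" using Cx by blast
      then show False using anti xy by blast
    qed
    have finC: "finite C" using CA finA finite_subset by blast
    have below: "le z y" if "z \<in> C" for z
      using trans[of z x y] that CA Cx xy by blast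
    have "insert y C \<in> CH y"
      unfolding CH_def is_chain_def
    proof (intro CollectI conjI ballI)
      show "insert y C \<subseteq> A" using CA xy by blast
      fix u v assume "u \<in> insert y C" "v \<in> insert y C"
      then show "le u v \<or> le v u" using Cch below refl xy(2) by blast
    next
      fix z assume "z \<in> insert y C"
      then show "le z y" using below refl xy(2) by blast
    qed
    then have "card (insert y C) \<in> card ` CH y" by (rule imageI)
    then have "card (insert y C) \<le> r y" unfolding r_def using finCH by (intro Max_ge) simp_all
    then show ?thesis using C yC finC by simp
  qed
  show ?thesis using b1 b2 by blast
qed

lemma upper_aux:
  assumes P: "is_poset A le"
  shows "contains_colored_copy A le c (height A le * n + dim2 A le) f \<or>
         contains_mono_Qn n (height A le * n + dim2 A le) f"
proof (rule disjCI)
  define h where "h = height A le"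
  define d where "d = dim2 A le"
  define N where "N = h * n + d"
  assume nm: "\<not> contains_mono_Qn n (height A le * n + dim2 A le) f"
  then have nm': "\<not> contains_mono_Qn n N f" unfolding N_def h_def d_def .
  have "\<exists>phi. induced_copy A le (LEAST N. \<exists>phi. induced_copy A le N phi) phi"
    by (rule LeastI_ex[OF embed_exists[OF P]])
  then obtain phi where phi: "induced_copy A le d phi"
    unfolding d_def dim2_def by blast
  have anti: "\<And>x y. x \<in> A \<Longrightarrow> y \<in> A \<Longrightarrow> le x y \<Longrightarrow> le y x \<Longrightarrow> x = y"
    using P unfolding is_poset_def by blast
  obtain r where r1: "\<forall>x\<in>A. 1 \<le> r x \<and> r x \<le> h"
      and r2: "\<forall>x\<in>A. \<forall>y\<in>A. le x y \<and> x \<noteq> y \<longrightarrow> r x < r y"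
    using rank_exists[OF P] unfolding h_def by blast
  have phiQ: "phi x \<subseteq> {..<d}" if "x \<in> A" for x
    using phi that unfolding induced_copy_def Q_def by blast
  define off where "off = (\<lambda>x. d + (r x - 1) * n)"
  define G where "G = (\<lambda>x Y. phi x \<union> {d..<off x} \<union> (\<lambda>y. y + off x) ` Y)"
  have offN: "off x + n \<le> N" if "x \<in> A" for x
  proof -
    have "(r x - 1) * n + n = r x * n" using r1 that by (cases "r x") auto
    moreover have "r x * n \<le> h * n" using r1 that by simp
    ultimately show ?thesis unfolding off_def N_def by linarith
  qed
  have Gsub: "G x Y \<subseteq> G x Y' \<longleftrightarrow> Y \<subseteq> Y'" if "x \<in> A" for x Y Y'
  proof
    assume H: "G x Y \<subseteq> G x Y'"
    show "Y \<subseteq> Y'"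
    proof
      fix y assume "y \<in> Y"
      then have "y + off x \<in> G x Y'" using H unfolding G_def by blast
      moreover have "y + off x \<notin> phi x" using phiQ[OF that] unfolding off_def by auto
      ultimately show "y \<in> Y'" unfolding G_def by auto
    qed
  qed (auto simp: G_def)
  have GQ: "G x Y \<in> Q N" if "x \<in> A" "Y \<subseteq> {..<n}" for x Y
  proof -
    have "(\<lambda>y. y + off x) ` Y \<subseteq> {..<N}" using offN[OF that(1)] that(2) by auto
    moreover have "off x \<le> N" using offN[OF that(1)] by simp
    moreover have "d \<le> N" unfolding N_def by simp
    ultimately show ?thesis using phiQ[OF that(1)] unfolding G_def Q_def by auto
  qed
  have exY: "\<exists>Y. Y \<subseteq> {..<n} \<and> f (G x Y) = c x" if "x \<in> A" for x
  proof (rule ccontr)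
    assume "\<not> ?thesis"
    then have all: "\<forall>Y\<in>Q n. f (G x Y) = (\<not> c x)" unfolding Q_def by auto
    have "induced_copy (Q n) (\<subseteq>) N (G x)"
      unfolding induced_copy_def
    proof (intro conjI)
      show "inj_on (G x) (Q n)"
        by (rule inj_onI) (metis Gsub[OF that] order_refl subset_antisym)
      show "G x ` Q n \<subseteq> Q N" using GQ[OF that] unfolding Q_def by auto
      show "\<forall>X\<in>Q n. \<forall>Y\<in>Q n. (X \<subseteq> Y) = (G x X \<subseteq> G x Y)" using Gsub[OF that] by blast
    qed
    then have "contains_mono_Qn n N f" unfolding contains_mono_Qn_def using all by blast
    then show False using nm' by blast
  qed
  define Ys where "Ys = (\<lambda>x. SOME Y. Y \<subseteq> {..<n} \<and> f (G x Y) = c x)"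
  have Ys: "Ys x \<subseteq> {..<n} \<and> f (G x (Ys x)) = c x" if "x \<in> A" for x
    unfolding Ys_def using someI_ex[OF exY[OF that]] .
  define psi where "psi = (\<lambda>x. G x (Ys x))"
  have low: "psi x \<inter> {..<d} = phi x" if "x \<in> A" for x
    using phiQ[OF that] unfolding psi_def G_def off_def by auto
  have high: "psi x - {..<d} \<subseteq> {d..<off x + n}" if "x \<in> A" for x
    using conjunct1[OF Ys[OF that]] phiQ[OF that] unfolding psi_def G_def off_def by auto
  have high2: "{d..<off x} \<subseteq> psi x" for x unfolding psi_def G_def by auto
  have ord: "le x y \<longleftrightarrow> psi x \<subseteq> psi y" if "x \<in> A" "y \<in> A" for x y
  proof
    assume le: "le x y"
    show "psi x \<subseteq> psi y"
    proof (cases "x = y")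
      case False
      then have "r x < r y" using r2 le that by blast
      then have "r x \<le> r y - 1" by simp
      then have "r x * n \<le> (r y - 1) * n" by simp
      moreover have "(r x - 1) * n + n = r x * n" using r1 that(1) by (cases "r x") auto
      ultimately have "off x + n \<le> off y" unfolding off_def by linarith
      then have "{d..<off x + n} \<subseteq> {d..<off y}" by auto
      then have "psi x - {..<d} \<subseteq> psi y" using high[OF that(1)] high2[of y] by blast
      moreover have "phi x \<subseteq> phi y" using phi le that unfolding induced_copy_def by blast
      then have "psi x \<inter> {..<d} \<subseteq> psi y" using low that by blast
      ultimately show ?thesis by blast
    qed simp
  next
    assume "psi x \<subseteq> psi y"
    then have "phi x \<subseteq> phi y" using low[OF that(1)] low[OF that(2)] by blast
    then show "le x y" using phi that unfolding induced_copy_def by blast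
  qed
  have "induced_copy A le N psi"
    unfolding induced_copy_def
  proof (intro conjI)
    show "inj_on psi A"
    proof (rule inj_onI)
      fix x y assume "x \<in> A" "y \<in> A" "psi x = psi y"
      then have "le x y" "le y x" using ord by auto
      then show "x = y" using anti \<open>x \<in> A\<close> \<open>y \<in> A\<close> by blast
    qed
    show "psi ` A \<subseteq> Q N" using GQ Ys unfolding psi_def by auto
    show "\<forall>x\<in>A. \<forall>y\<in>A. le x y = (psi x \<subseteq> psi y)" using ord by blast
  qed
  moreover have "\<forall>x\<in>A. f (psi x) = c x" using Ys unfolding psi_def by blast
  ultimately show "contains_colored_copy A le c (height A le * n + dim2 A le) f"
    unfolding contains_colored_copy_def N_def h_def d_def by blast
qed

theorem theorem1:
  fixes A :: "'a set" and le :: "'a \<Rightarrow> 'a \<Rightarrow> bool" and c :: "'a \<Rightarrow> bool" and n :: nat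
  assumes "is_poset A le"
    and "diverse A le c"
    and "0 < n"
  shows "2 * n \<le> poset_EH_number A le c n \<and>
         poset_EH_number A le c n \<le> height A le * n + dim2 A le"
proof
  let ?P = "\<lambda>N. \<forall>f :: nat set \<Rightarrow> bool. contains_colored_copy A le c N f \<or> contains_mono_Qn n N f"
  have up: "?P (height A le * n + dim2 A le)" using upper_aux[OF assms(1)] by blast
  show "poset_EH_number A le c n \<le> height A le * n + dim2 A le"
    unfolding poset_EH_number_def by (rule Least_le) (rule up)
  have "?P (poset_EH_number A le c n)" unfolding poset_EH_number_def by (rule LeastI) (rule up)
  show "2 * n \<le> poset_EH_number A le c n"
  proof (rule ccontr)
    assume "\<not> 2 * n \<le> poset_EH_number A le c n"
    then have "poset_EH_number A le c n < 2 * n" by simp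
    from lower_aux[OF this assms(2)] show False using \<open>?P (poset_EH_number A le c n)\<close> by blast
  qed
qed

end
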